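(* Let $A$ be a non-negatively graded pseudo-compact dg algebra over a commutative ring $k$. Then any homotopy equivalence between two minimal twisted $A$-modules is an isomorphism.
   Context: A twisted $A$-module is a right dg $A$-module $M=V\otimes A$ (completed tensor product) with $V$ a free graded $k$-module and differential $D_M$ compatible with the module structure. The restriction of $D_M$ to $V\otimes 1$ decomposes as $d^0+d^1+d^2+\cdots$ with $d^n:V\to V\otimes A^n$. $M$ is minimal if $d^0=0$. A homotopy equivalence is a closed degree-0 module map admitting a closed degree-0 map in the other direction such that both composites are cohomologous to the identities in the dg Hom complexes. *)

theory Defs
  imports Main
begin

text \<open>A graded dg algebra A over k is modelled inside an ambient ring type 'a:
  comp A n is the homogeneous component A^n (the sum of the components is required
  to be direct), sm A is the k-action, dA A the differential, and opens A a basis of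
  open graded two-sided dg ideals (each given by its set of homogeneous elements).\<close>

record ('k, 'a) dga =
  comp  :: "int \<Rightarrow> 'a set"
  sm    :: "'k \<Rightarrow> 'a \<Rightarrow> 'a"
  dA    :: "'a \<Rightarrow> 'a"
  opens :: "'a set set"

definition sgn_pow :: "int \<Rightarrow> 'a::ring_1" where
  "sgn_pow n = (if even n then 1 else - 1)"

definition ksubmod :: "('k, 'a::ring_1, 'z) dga_scheme \<Rightarrow> 'a set \<Rightarrow> bool" where
  "ksubmod A S \<longleftrightarrow> 0 \<in> S \<and> (\<forall>x\<in>S. \<forall>y\<in>S. x + y \<in> S) \<and> (\<forall>c x. x \<in> S \<longrightarrow> sm A c x \<in> S)"

definition fin_length_quot :: "('k, 'a::ring_1, 'z) dga_scheme \<Rightarrow> 'a set \<Rightarrow> 'a set \<Rightarrow> bool" where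
  "fin_length_quot A L U \<longleftrightarrow> (\<exists>N::nat. \<forall>Ss::'a set list.
      (\<forall>i<length Ss. ksubmod A (Ss ! i) \<and> L \<subseteq> Ss ! i \<and> Ss ! i \<subseteq> U) \<and> sorted_wrt (\<subset>) Ss
      \<longrightarrow> length Ss \<le> N)"

definition is_dga :: "('k::comm_ring_1, 'a::ring_1, 'z) dga_scheme \<Rightarrow> bool" where
  "is_dga A \<longleftrightarrow>
     (\<forall>n. ksubmod A (comp A n)) \<and>
     (\<forall>S x. finite S \<longrightarrow> (\<forall>n\<in>S. x n \<in> comp A n) \<longrightarrow> sum x S = 0 \<longrightarrow> (\<forall>n\<in>S. x n = 0)) \<and>
     1 \<in> comp A 0 \<and>
     (\<forall>p q x y. x \<in> comp A p \<longrightarrow> y \<in> comp A q \<longrightarrow> x * y \<in> comp A (p + q)) \<and>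
     (\<forall>n x y c. x \<in> comp A n \<longrightarrow> y \<in> comp A n \<longrightarrow> sm A c (x + y) = sm A c x + sm A c y) \<and>
     (\<forall>n x c c'. x \<in> comp A n \<longrightarrow> sm A (c + c') x = sm A c x + sm A c' x) \<and>
     (\<forall>n x c c'. x \<in> comp A n \<longrightarrow> sm A (c * c') x = sm A c (sm A c' x)) \<and>
     (\<forall>n x. x \<in> comp A n \<longrightarrow> sm A 1 x = x) \<and>
     (\<forall>p q x y c. x \<in> comp A p \<longrightarrow> y \<in> comp A q \<longrightarrow>
         sm A c (x * y) = sm A c x * y \<and> sm A c (x * y) = x * sm A c y) \<and>
     (\<forall>n x. x \<in> comp A n \<longrightarrow> dA A x \<in> comp A (n + 1)) \<and>
     (\<forall>n x y. x \<in> comp A n \<longrightarrow> y \<in> comp A n \<longrightarrow> dA A (x + y) = dA A x + dA A y) \<and>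
     (\<forall>n x c. x \<in> comp A n \<longrightarrow> dA A (sm A c x) = sm A c (dA A x)) \<and>
     (\<forall>n x. x \<in> comp A n \<longrightarrow> dA A (dA A x) = 0) \<and>
     (\<forall>p q x y. x \<in> comp A p \<longrightarrow> y \<in> comp A q \<longrightarrow>
         dA A (x * y) = dA A x * y + sgn_pow p * (x * dA A y))"

definition nonneg_graded :: "('k, 'a::ring_1, 'z) dga_scheme \<Rightarrow> bool" where
  "nonneg_graded A \<longleftrightarrow> (\<forall>n<0. comp A n = {0})"

definition pseudo_compact :: "('k::comm_ring_1, 'a::ring_1, 'z) dga_scheme \<Rightarrow> bool" where
  "pseudo_compact A \<longleftrightarrow>
     opens A \<noteq> {} \<and>
     (\<forall>I\<in>opens A. \<forall>J\<in>opens A. \<exists>K\<in>opens A. K \<subseteq> I \<inter> J) \<and>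
     (\<forall>I\<in>opens A.
        I \<subseteq> (\<Union>n. comp A n) \<and>
        (\<forall>n. ksubmod A (I \<inter> comp A n)) \<and>
        (\<forall>p q x y. x \<in> I \<inter> comp A p \<longrightarrow> y \<in> comp A q \<longrightarrow> x * y \<in> I \<and> y * x \<in> I) \<and>
        (\<forall>n x. x \<in> I \<inter> comp A n \<longrightarrow> dA A x \<in> I) \<and>
        finite {n. \<not> comp A n \<subseteq> I} \<and>
        (\<forall>n. fin_length_quot A (I \<inter> comp A n) (comp A n))) \<and>
     (\<forall>n x. x \<in> comp A n \<longrightarrow> (\<forall>I\<in>opens A. x \<in> I) \<longrightarrow> x = 0) \<and>
     (\<forall>n c. (\<forall>I\<in>opens A. c I \<in> comp A n) \<longrightarrow>
            (\<forall>I\<in>opens A. \<forall>J\<in>opens A. I \<subseteq> J \<longrightarrow> c I - c J \<in> J) \<longrightarrow>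
            (\<exists>x\<in>comp A n. \<forall>I\<in>opens A. x - c I \<in> I))"

text \<open>V is the free graded k-module with basis basis M (basis element b in degree
  vdeg M b).  A homogeneous element of degree n of the completed tensor product
  V \<otimes>^ A = lim_I (V \<otimes> A/I) is a family (m_b) with m_b in A^(n - vdeg b) such that
  for each open ideal I almost all m_b lie in I.\<close>

record ('b, 'a) twmod =
  basis :: "'b set"
  vdeg  :: "'b \<Rightarrow> int"
  Dm    :: "('b \<Rightarrow> 'a) \<Rightarrow> ('b \<Rightarrow> 'a)"

definition tw_el :: "('k, 'a::ring_1, 'z) dga_scheme \<Rightarrow> ('b, 'a, 'y) twmod_scheme \<Rightarrow> int \<Rightarrow> ('b \<Rightarrow> 'a) \<Rightarrow> bool" where
  "tw_el A M n m \<longleftrightarrow>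
     (\<forall>b. b \<notin> basis M \<longrightarrow> m b = 0) \<and>
     (\<forall>b\<in>basis M. m b \<in> comp A (n - vdeg M b)) \<and>
     (\<forall>I\<in>opens A. finite {b\<in>basis M. m b \<notin> I})"

text \<open>Continuous k-linear maps of degree p (degreewise continuity for the linear
  topology with basis of open submodules V \<otimes>^ I).\<close>
definition cont_lin :: "('k, 'a::ring_1, 'z) dga_scheme \<Rightarrow> ('b, 'a, 'y) twmod_scheme \<Rightarrow>
    ('c, 'a, 'x) twmod_scheme \<Rightarrow> int \<Rightarrow> (('b \<Rightarrow> 'a) \<Rightarrow> ('c \<Rightarrow> 'a)) \<Rightarrow> bool" where
  "cont_lin A M N p f \<longleftrightarrow>
     (\<forall>n m. tw_el A M n m \<longrightarrow> tw_el A N (n + p) (f m)) \<and>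
     (\<forall>n m m'. tw_el A M n m \<longrightarrow> tw_el A M n m' \<longrightarrow> f (\<lambda>b. m b + m' b) = (\<lambda>x. f m x + f m' x)) \<and>
     (\<forall>n m c. tw_el A M n m \<longrightarrow> f (\<lambda>b. sm A c (m b)) = (\<lambda>x. sm A c (f m x))) \<and>
     (\<forall>n. \<forall>I\<in>opens A. \<exists>J\<in>opens A. \<forall>m. tw_el A M n m \<longrightarrow> (\<forall>b. m b \<in> J) \<longrightarrow> (\<forall>x. f m x \<in> I))"

definition mod_map :: "('k, 'a::ring_1, 'z) dga_scheme \<Rightarrow> ('b, 'a, 'y) twmod_scheme \<Rightarrow>
    ('c, 'a, 'x) twmod_scheme \<Rightarrow> int \<Rightarrow> (('b \<Rightarrow> 'a) \<Rightarrow> ('c \<Rightarrow> 'a)) \<Rightarrow> bool" where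
  "mod_map A M N p f \<longleftrightarrow> cont_lin A M N p f \<and>
     (\<forall>n q m a. tw_el A M n m \<longrightarrow> a \<in> comp A q \<longrightarrow> f (\<lambda>b. m b * a) = (\<lambda>x. f m x * a))"

definition is_twisted :: "('k, 'a::ring_1, 'z) dga_scheme \<Rightarrow> ('b, 'a, 'y) twmod_scheme \<Rightarrow> bool" where
  "is_twisted A M \<longleftrightarrow> cont_lin A M M 1 (Dm M) \<and>
     (\<forall>n q m a. tw_el A M n m \<longrightarrow> a \<in> comp A q \<longrightarrow>
        Dm M (\<lambda>b. m b * a) = (\<lambda>b. Dm M m b * a + sgn_pow n * (m b * dA A a))) \<and>
     (\<forall>n m. tw_el A M n m \<longrightarrow> Dm M (Dm M m) = (\<lambda>b. 0))"

definition basis_el :: "'b \<Rightarrow> ('b \<Rightarrow> 'a::ring_1)" where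
  "basis_el b = (\<lambda>b'. if b' = b then 1 else 0)"

text \<open>d^n : V \<rightarrow> V \<otimes> A^n, the part of D_M(b \<otimes> 1) with coefficients in A^n.\<close>
definition dcomp :: "('b, 'a::ring_1, 'y) twmod_scheme \<Rightarrow> int \<Rightarrow> 'b \<Rightarrow> ('b \<Rightarrow> 'a)" where
  "dcomp M n b = (\<lambda>b'. if vdeg M b' = vdeg M b + 1 - n then Dm M (basis_el b) b' else 0)"

definition minimal :: "('b, 'a::ring_1, 'y) twmod_scheme \<Rightarrow> bool" where
  "minimal M \<longleftrightarrow> (\<forall>b\<in>basis M. dcomp M 0 b = (\<lambda>_. 0))"

definition closed0 :: "('k, 'a::ring_1, 'z) dga_scheme \<Rightarrow> ('b, 'a, 'y) twmod_scheme \<Rightarrow>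
    ('c, 'a, 'x) twmod_scheme \<Rightarrow> (('b \<Rightarrow> 'a) \<Rightarrow> ('c \<Rightarrow> 'a)) \<Rightarrow> bool" where
  "closed0 A M N f \<longleftrightarrow> mod_map A M N 0 f \<and>
     (\<forall>n m. tw_el A M n m \<longrightarrow> Dm N (f m) = f (Dm M m))"

definition coh_id :: "('k, 'a::ring_1, 'z) dga_scheme \<Rightarrow> ('b, 'a, 'y) twmod_scheme \<Rightarrow>
    (('b \<Rightarrow> 'a) \<Rightarrow> ('b \<Rightarrow> 'a)) \<Rightarrow> bool" where
  "coh_id A M u \<longleftrightarrow> (\<exists>h. mod_map A M M (-1) h \<and>
     (\<forall>n m. tw_el A M n m \<longrightarrow> (\<lambda>b. u m b - m b) = (\<lambda>b. Dm M (h m) b + h (Dm M m) b)))"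

definition homotopy_equiv :: "('k, 'a::ring_1, 'z) dga_scheme \<Rightarrow> ('b, 'a, 'y) twmod_scheme \<Rightarrow>
    ('c, 'a, 'x) twmod_scheme \<Rightarrow> (('b \<Rightarrow> 'a) \<Rightarrow> ('c \<Rightarrow> 'a)) \<Rightarrow> bool" where
  "homotopy_equiv A M N f \<longleftrightarrow> closed0 A M N f \<and>
     (\<exists>g. closed0 A N M g \<and> coh_id A M (g \<circ> f) \<and> coh_id A N (f \<circ> g))"

definition is_iso :: "('k, 'a::ring_1, 'z) dga_scheme \<Rightarrow> ('b, 'a, 'y) twmod_scheme \<Rightarrow>
    ('c, 'a, 'x) twmod_scheme \<Rightarrow> (('b \<Rightarrow> 'a) \<Rightarrow> ('c \<Rightarrow> 'a)) \<Rightarrow> bool" where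
  "is_iso A M N f \<longleftrightarrow> closed0 A M N f \<and>
     (\<exists>g. closed0 A N M g \<and> (\<forall>n m. tw_el A M n m \<longrightarrow> g (f m) = m) \<and>
                           (\<forall>n m. tw_el A N n m \<longrightarrow> f (g m) = m))"

end

theory Submission
  imports Defs
begin

definition filt :: "('b, 'a::ring_1, 'y) twmod_scheme \<Rightarrow> int \<Rightarrow> int \<Rightarrow> ('b \<Rightarrow> 'a) \<Rightarrow> bool" where
  "filt M p n m \<longleftrightarrow> (\<forall>b. n - vdeg M b < p \<longrightarrow> m b = 0)"

locale pcA =
  fixes A :: "('k::comm_ring_1, 'a::ring_1) dga"
  assumes dga: "is_dga A" and nn: "nonneg_graded A" and pc: "pseudo_compact A"
begin

lemmas dgaU = dga[unfolded is_dga_def]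
lemmas dg1 = dgaU[THEN conjunct1]
lemmas dg2 = dgaU[THEN conjunct2, THEN conjunct1]
lemmas dg3 = dgaU[THEN conjunct2, THEN conjunct2, THEN conjunct1]
lemmas dg4 = dgaU[THEN conjunct2, THEN conjunct2, THEN conjunct2, THEN conjunct1]
lemmas dg5 = dgaU[THEN conjunct2, THEN conjunct2, THEN conjunct2, THEN conjunct2, THEN conjunct1]
lemmas dg6 = dgaU[THEN conjunct2, THEN conjunct2, THEN conjunct2, THEN conjunct2, THEN conjunct2, THEN conjunct1]
lemmas dg7 = dgaU[THEN conjunct2, THEN conjunct2, THEN conjunct2, THEN conjunct2, THEN conjunct2, THEN conjunct2, THEN conjunct1]
lemmas dg8 = dgaU[THEN conjunct2, THEN conjunct2, THEN conjunct2, THEN conjunct2, THEN conjunct2, THEN conjunct2, THEN conjunct2, THEN conjunct1]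
lemmas dg9 = dgaU[THEN conjunct2, THEN conjunct2, THEN conjunct2, THEN conjunct2, THEN conjunct2, THEN conjunct2, THEN conjunct2, THEN conjunct2, THEN conjunct1]
lemmas dg10 = dgaU[THEN conjunct2, THEN conjunct2, THEN conjunct2, THEN conjunct2, THEN conjunct2, THEN conjunct2, THEN conjunct2, THEN conjunct2, THEN conjunct2, THEN conjunct1]
lemmas dg11 = dgaU[THEN conjunct2, THEN conjunct2, THEN conjunct2, THEN conjunct2, THEN conjunct2, THEN conjunct2, THEN conjunct2, THEN conjunct2, THEN conjunct2, THEN conjunct2, THEN conjunct1]
lemmas dg12 = dgaU[THEN conjunct2, THEN conjunct2, THEN conjunct2, THEN conjunct2, THEN conjunct2, THEN conjunct2, THEN conjunct2, THEN conjunct2, THEN conjunct2, THEN conjunct2, THEN conjunct2, THEN conjunct1]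
lemmas dg13 = dgaU[THEN conjunct2, THEN conjunct2, THEN conjunct2, THEN conjunct2, THEN conjunct2, THEN conjunct2, THEN conjunct2, THEN conjunct2, THEN conjunct2, THEN conjunct2, THEN conjunct2, THEN conjunct2, THEN conjunct1]
lemmas dg14 = dgaU[THEN conjunct2, THEN conjunct2, THEN conjunct2, THEN conjunct2, THEN conjunct2, THEN conjunct2, THEN conjunct2, THEN conjunct2, THEN conjunct2, THEN conjunct2, THEN conjunct2, THEN conjunct2, THEN conjunct2]
lemmas pcU = pc[unfolded pseudo_compact_def]
lemmas pc1 = pcU[THEN conjunct1]
lemmas pc2 = pcU[THEN conjunct2, THEN conjunct1]
lemmas pc3 = pcU[THEN conjunct2, THEN conjunct2, THEN conjunct1]
lemmas pc4 = pcU[THEN conjunct2, THEN conjunct2, THEN conjunct2, THEN conjunct1]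
lemmas pc5 = pcU[THEN conjunct2, THEN conjunct2, THEN conjunct2, THEN conjunct2]

lemma ks: "ksubmod A (comp A n)" using dg1 by blast
lemma zero_in[simp]: "0 \<in> comp A n" using ks unfolding ksubmod_def by blast
lemma add_in: "x \<in> comp A n \<Longrightarrow> y \<in> comp A n \<Longrightarrow> x + y \<in> comp A n"
  using ks unfolding ksubmod_def by blast
lemma sm_in: "x \<in> comp A n \<Longrightarrow> sm A c x \<in> comp A n"
  using ks unfolding ksubmod_def by blast
lemma sm_add_k: "x \<in> comp A n \<Longrightarrow> sm A (c + c') x = sm A c x + sm A c' x"
  using dg6 by blast
lemma sm_one: "x \<in> comp A n \<Longrightarrow> sm A 1 x = x"
  using dg8 by blast
lemma sm_zero: "x \<in> comp A n \<Longrightarrow> sm A 0 x = 0"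
proof -
  assume x: "x \<in> comp A n"
  from sm_add_k[OF x, of 0 0] have "sm A 0 x = sm A 0 x + sm A 0 x" by simp
  thus ?thesis by (metis add_cancel_left_right)
qed
lemma sm_m1: "x \<in> comp A n \<Longrightarrow> sm A (-1) x = - x"
proof -
  assume x: "x \<in> comp A n"
  from sm_add_k[OF x, of 1 "-1"] have "sm A 0 x = sm A 1 x + sm A (-1) x" by simp
  hence "x + sm A (-1) x = 0" using sm_zero[OF x] sm_one[OF x] by simp
  thus ?thesis by (metis add.inverse_unique)
qed
lemma neg_in: "x \<in> comp A n \<Longrightarrow> - x \<in> comp A n"
  using sm_m1 sm_in by metis
lemma diff_in: "x \<in> comp A n \<Longrightarrow> y \<in> comp A n \<Longrightarrow> x - y \<in> comp A n"
  using add_in neg_in by (metis diff_conv_add_uminus)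
lemma mult_in: "x \<in> comp A p \<Longrightarrow> y \<in> comp A q \<Longrightarrow> x * y \<in> comp A (p + q)"
  using dg4 by blast
lemma neg_deg: "n < 0 \<Longrightarrow> x \<in> comp A n \<Longrightarrow> x = 0"
  using nn unfolding nonneg_graded_def by blast
lemma dA_zero: "dA A 0 = 0"
proof -
  have "dA A (0 + 0) = dA A 0 + dA A 0" using dg11 zero_in by blast
  thus ?thesis by simp
qed

lemma op_ks: "I \<in> opens A \<Longrightarrow> ksubmod A (I \<inter> comp A n)"
  using pc3 by blast
lemma op_zero: "I \<in> opens A \<Longrightarrow> 0 \<in> I"
  using op_ks[of I 0] unfolding ksubmod_def by blast
lemma op_add: "I \<in> opens A \<Longrightarrow> x \<in> I \<Longrightarrow> y \<in> I \<Longrightarrow> x \<in> comp A n \<Longrightarrow> y \<in> comp A n \<Longrightarrow> x + y \<in> I"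
  using op_ks[of I n] unfolding ksubmod_def by blast
lemma op_neg: "I \<in> opens A \<Longrightarrow> x \<in> I \<Longrightarrow> x \<in> comp A n \<Longrightarrow> - x \<in> I"
  using op_ks[of I n] sm_m1[of x n] unfolding ksubmod_def by (metis IntD1 IntI)
lemma op_diff: "I \<in> opens A \<Longrightarrow> x \<in> I \<Longrightarrow> y \<in> I \<Longrightarrow> x \<in> comp A n \<Longrightarrow> y \<in> comp A n \<Longrightarrow> x - y \<in> I"
  using op_add op_neg neg_in by (metis diff_conv_add_uminus)
lemma op_mult: "I \<in> opens A \<Longrightarrow> x \<in> I \<Longrightarrow> x \<in> comp A p \<Longrightarrow> y \<in> comp A q \<Longrightarrow> x * y \<in> I"
  using pc3 by blast
lemma op_high: "I \<in> opens A \<Longrightarrow> \<exists>N::nat. \<forall>j. int N \<le> j \<longrightarrow> comp A j \<subseteq> I"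
proof -
  assume I: "I \<in> opens A"
  hence fin: "finite {n. \<not> comp A n \<subseteq> I}" using pc3[rule_format, OF I, THEN conjunct2, THEN conjunct2, THEN conjunct2, THEN conjunct2, THEN conjunct1] by simp
  obtain B where B: "\<forall>j\<in>{n. \<not> comp A n \<subseteq> I}. j \<le> B"
    using bdd_above_finite[OF fin] unfolding bdd_above_def by (elim exE) (rule that)
  have "\<forall>j. int (nat (B + 1)) \<le> j \<longrightarrow> comp A j \<subseteq> I"
  proof (intro allI impI)
    fix j assume "int (nat (B + 1)) \<le> j"
    hence "\<not> j \<le> B" by linarith
    thus "comp A j \<subseteq> I" using B by blast
  qed
  thus ?thesis by blast
qed
lemma op_dir: "I \<in> opens A \<Longrightarrow> J \<in> opens A \<Longrightarrow> \<exists>K\<in>opens A. K \<subseteq> I \<and> K \<subseteq> J"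
proof -
  assume I: "I \<in> opens A" and J: "J \<in> opens A"
  obtain K where "K \<in> opens A" "K \<subseteq> I \<inter> J" using pc2[rule_format, OF I J] by (elim bexE)
  thus ?thesis by (intro bexI[of _ K]) auto
qed
lemma sep: "x \<in> comp A n \<Longrightarrow> (\<forall>I\<in>opens A. x \<in> I) \<Longrightarrow> x = 0"
  by (rule pc4[rule_format]) auto

lemma tw_out: "tw_el A M n m \<Longrightarrow> b \<notin> basis M \<Longrightarrow> m b = 0"
  unfolding tw_el_def by blast
lemma tw_in: "tw_el A M n m \<Longrightarrow> m b \<in> comp A (n - vdeg M b)"
  unfolding tw_el_def by (cases "b \<in> basis M") auto
lemma tw_fin: "tw_el A M n m \<Longrightarrow> I \<in> opens A \<Longrightarrow> finite {b\<in>basis M. m b \<notin> I}"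
  unfolding tw_el_def by blast
lemma tw_zero: "tw_el A M n (\<lambda>b. 0)"
  unfolding tw_el_def using op_zero by auto
lemma tw_add: "tw_el A M n m \<Longrightarrow> tw_el A M n m' \<Longrightarrow> tw_el A M n (\<lambda>b. m b + m' b)"
proof -
  assume a: "tw_el A M n m" "tw_el A M n m'"
  have "finite {b\<in>basis M. m b + m' b \<notin> I}" if I: "I \<in> opens A" for I
  proof (rule finite_subset[OF _ finite_UnI[OF tw_fin[OF a(1) I] tw_fin[OF a(2) I]]])
    show "{b\<in>basis M. m b + m' b \<notin> I} \<subseteq> {b\<in>basis M. m b \<notin> I} \<union> {b\<in>basis M. m' b \<notin> I}"
      using op_add[OF I _ _ tw_in[OF a(1)] tw_in[OF a(2)]] by blast
  qed
  thus ?thesis using a tw_in[OF a(1)] tw_in[OF a(2)] add_in unfolding tw_el_def by auto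
qed
lemma tw_neg: "tw_el A M n m \<Longrightarrow> tw_el A M n (\<lambda>b. - m b)"
proof -
  assume a: "tw_el A M n m"
  have "finite {b\<in>basis M. - m b \<notin> I}" if I: "I \<in> opens A" for I
  proof (rule finite_subset[OF _ tw_fin[OF a I]])
    show "{b\<in>basis M. - m b \<notin> I} \<subseteq> {b\<in>basis M. m b \<notin> I}"
      using op_neg[OF I _ tw_in[OF a]] by blast
  qed
  thus ?thesis using a tw_in[OF a] neg_in unfolding tw_el_def by auto
qed
lemma tw_diff: "tw_el A M n m \<Longrightarrow> tw_el A M n m' \<Longrightarrow> tw_el A M n (\<lambda>b. m b - m' b)"
  using tw_add[of M n m "\<lambda>b. - m' b"] tw_neg[of M n m'] by simp
lemma tw_mult: "tw_el A M n m \<Longrightarrow> a \<in> comp A q \<Longrightarrow> tw_el A M (n + q) (\<lambda>b. m b * a)"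
proof -
  assume a: "tw_el A M n m" and aq: "a \<in> comp A q"
  have "finite {b\<in>basis M. m b * a \<notin> I}" if I: "I \<in> opens A" for I
  proof (rule finite_subset[OF _ tw_fin[OF a I]])
    show "{b\<in>basis M. m b * a \<notin> I} \<subseteq> {b\<in>basis M. m b \<notin> I}"
      using op_mult[OF I _ tw_in[OF a] aq] by blast
  qed
  moreover have "m b * a \<in> comp A (n + q - vdeg M b)" for b
    using mult_in[OF tw_in[OF a, of b] aq] by (simp add: algebra_simps)
  ultimately show ?thesis using a unfolding tw_el_def by auto
qed
lemma tw_basis: "b \<in> basis M \<Longrightarrow> tw_el A M (vdeg M b) (basis_el b)"
proof -
  assume b: "b \<in> basis M"
  have one: "1 \<in> comp A 0" using dg3 by blast
  have "finite {b'\<in>basis M. basis_el b b' \<notin> I}" if I: "I \<in> opens A" for I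
    by (rule finite_subset[of _ "{b}"]) (auto simp: basis_el_def op_zero[OF I])
  thus ?thesis using b one unfolding tw_el_def basis_el_def by auto
qed
lemma tw_sum: "finite S \<Longrightarrow> (\<forall>i\<in>S. tw_el A M n (g i)) \<Longrightarrow> tw_el A M n (\<lambda>b. \<Sum>i\<in>S. g i b)"
proof (induction S rule: finite_induct)
  case empty thus ?case using tw_zero by simp
next
  case (insert x F)
  thus ?case using tw_add[of M n "g x" "\<lambda>b. \<Sum>i\<in>F. g i b"] by simp
qed
lemma tw_restr: "tw_el A M n m \<Longrightarrow> tw_el A M n (\<lambda>b. if b \<in> S then 0 else m b)"
proof -
  assume a: "tw_el A M n m"
  have "finite {b\<in>basis M. (if b \<in> S then 0 else m b) \<notin> I}" if I: "I \<in> opens A" for I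
    by (rule finite_subset[OF _ tw_fin[OF a I]]) (auto simp: op_zero[OF I])
  thus ?thesis using a tw_in[OF a] unfolding tw_el_def by auto
qed
lemma tw_eqI: "tw_el A M n x \<Longrightarrow> tw_el A M n y \<Longrightarrow> (\<And>I b. I \<in> opens A \<Longrightarrow> x b - y b \<in> I) \<Longrightarrow> x = y"
proof
  fix b assume a: "tw_el A M n x" "tw_el A M n y" and h: "\<And>I b. I \<in> opens A \<Longrightarrow> x b - y b \<in> I"
  have "x b - y b = 0" using sep[OF diff_in[OF tw_in[OF a(1)] tw_in[OF a(2)]]] h by blast
  thus "x b = y b" by simp
qed

end

lemma sum_basis: "finite S \<Longrightarrow> (\<Sum>b\<in>S. basis_el b b' * (m b::'a::ring_1)) = (if b' \<in> S then m b' else 0)"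
proof -
  assume S: "finite S"
  have "(\<Sum>b\<in>S. basis_el b b' * m b) = (\<Sum>b\<in>S. if b' = b then m b else 0)"
    unfolding basis_el_def by (rule sum.cong) auto
  thus ?thesis using sum.delta'[OF S, of b' m] by simp
qed

context pcA begin

lemma cl_tw: "cont_lin A M N p f \<Longrightarrow> tw_el A M n m \<Longrightarrow> tw_el A N (n + p) (f m)"
  unfolding cont_lin_def by (drule conjunct1) blast
lemma cl_add: "cont_lin A M N p f \<Longrightarrow> tw_el A M n m \<Longrightarrow> tw_el A M n m' \<Longrightarrow>
    f (\<lambda>b. m b + m' b) = (\<lambda>x. f m x + f m' x)"
  unfolding cont_lin_def by (drule conjunct2, drule conjunct1) blast
lemma cl_sm: "cont_lin A M N p f \<Longrightarrow> tw_el A M n m \<Longrightarrow>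
    f (\<lambda>b. sm A c (m b)) = (\<lambda>x. sm A c (f m x))"
  unfolding cont_lin_def by (drule conjunct2, drule conjunct2, drule conjunct1) blast
lemma cl_cont: "cont_lin A M N p f \<Longrightarrow> I \<in> opens A \<Longrightarrow>
    \<exists>J\<in>opens A. \<forall>m. tw_el A M n m \<longrightarrow> (\<forall>b. m b \<in> J) \<longrightarrow> (\<forall>x. f m x \<in> I)"
  unfolding cont_lin_def by (drule conjunct2, drule conjunct2, drule conjunct2) blast
lemma cl_zero: "cont_lin A M N p f \<Longrightarrow> f (\<lambda>b. 0) = (\<lambda>x. 0)"
proof
  fix x assume f: "cont_lin A M N p f"
  have "f (\<lambda>b. 0 + 0) = (\<lambda>x. f (\<lambda>b. 0) x + f (\<lambda>b. 0) x)"
    by (rule cl_add[OF f tw_zero tw_zero])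
  hence "f (\<lambda>b. 0) x = f (\<lambda>b. 0) x + f (\<lambda>b. 0) x" by (metis add_0)
  thus "f (\<lambda>b. 0) x = 0" by (metis add_cancel_left_right)
qed
lemma cl_neg: "cont_lin A M N p f \<Longrightarrow> tw_el A M n m \<Longrightarrow> f (\<lambda>b. - m b) = (\<lambda>x. - f m x)"
proof -
  assume f: "cont_lin A M N p f" and m: "tw_el A M n m"
  have "(\<lambda>b. - m b) = (\<lambda>b. sm A (-1) (m b))" using sm_m1[OF tw_in[OF m]] by simp
  hence "f (\<lambda>b. - m b) = (\<lambda>x. sm A (-1) (f m x))" using cl_sm[OF f m] by simp
  thus ?thesis using sm_m1[OF tw_in[OF cl_tw[OF f m]]] by simp
qed
lemma cl_diff: "cont_lin A M N p f \<Longrightarrow> tw_el A M n m \<Longrightarrow> tw_el A M n m' \<Longrightarrow>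
    f (\<lambda>b. m b - m' b) = (\<lambda>x. f m x - f m' x)"
proof -
  assume f: "cont_lin A M N p f" and m: "tw_el A M n m" and m': "tw_el A M n m'"
  have "f (\<lambda>b. m b + - m' b) = (\<lambda>x. f m x + f (\<lambda>b. - m' b) x)"
    by (rule cl_add[OF f m tw_neg[OF m']])
  thus ?thesis using cl_neg[OF f m'] by simp
qed
lemma cl_sum:
  assumes f: "cont_lin A M N p f" and S: "finite S"
  shows "(\<forall>i\<in>S. tw_el A M n (g i)) \<Longrightarrow> f (\<lambda>b. \<Sum>i\<in>S. g i b) = (\<lambda>x. \<Sum>i\<in>S. f (g i) x)"
  using S
proof (induction S rule: finite_induct)
  case empty thus ?case using cl_zero[OF f] by simp
next
  case (insert y F)
  have "f (\<lambda>b. g y b + (\<Sum>i\<in>F. g i b)) = (\<lambda>x. f (g y) x + f (\<lambda>b. \<Sum>i\<in>F. g i b) x)"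
    using cl_add[OF f, of n "g y" "\<lambda>b. \<Sum>i\<in>F. g i b"] insert tw_sum[OF insert(1), of M n g] by simp
  thus ?case using insert by simp
qed

lemma mm_cl: "mod_map A M N p f \<Longrightarrow> cont_lin A M N p f"
  unfolding mod_map_def by blast
lemma mm_mult: "mod_map A M N p f \<Longrightarrow> tw_el A M n m \<Longrightarrow> a \<in> comp A q \<Longrightarrow>
    f (\<lambda>b. m b * a) = (\<lambda>x. f m x * a)"
  unfolding mod_map_def by (drule conjunct2) blast
lemma c0_mm: "closed0 A M N f \<Longrightarrow> mod_map A M N 0 f"
  unfolding closed0_def by blast
lemma c0_D: "closed0 A M N f \<Longrightarrow> tw_el A M n m \<Longrightarrow> Dm N (f m) = f (Dm M m)"
  unfolding closed0_def by (drule conjunct2) blast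
lemma twD_cl: "is_twisted A M \<Longrightarrow> cont_lin A M M 1 (Dm M)"
  unfolding is_twisted_def by blast
lemma tw_leib: "is_twisted A M \<Longrightarrow> tw_el A M n m \<Longrightarrow> a \<in> comp A q \<Longrightarrow>
    Dm M (\<lambda>b. m b * a) = (\<lambda>b. Dm M m b * a + sgn_pow n * (m b * dA A a))"
  unfolding is_twisted_def by (drule conjunct2, drule conjunct1) blast

lemma lemX:
  assumes f: "cont_lin A M N q f" and m: "tw_el A M n m" and fm: "filt M p n m"
    and H: "\<And>b j a. b \<in> basis M \<Longrightarrow> p \<le> j \<Longrightarrow> a \<in> comp A j \<Longrightarrow>
              filt N (p + s) (vdeg M b + j + q) (f (\<lambda>b'. basis_el b b' * a))"
  shows "filt N (p + s) (n + q) (f m)"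
  unfolding filt_def
proof (intro allI impI)
  fix c assume c: "n + q - vdeg N c < p + s"
  have xin: "f m c \<in> comp A (n + q - vdeg N c)" using tw_in[OF cl_tw[OF f m]] .
  have "\<forall>I\<in>opens A. f m c \<in> I"
  proof
    fix I assume I: "I \<in> opens A"
    obtain J where J: "J \<in> opens A" and cJ: "\<forall>m. tw_el A M n m \<longrightarrow> (\<forall>b. m b \<in> J) \<longrightarrow> (\<forall>x. f m x \<in> I)"
      using cl_cont[OF f I, of n] by blast
    define S where "S = {b\<in>basis M. m b \<notin> J}"
    have finS: "finite S" using tw_fin[OF m J] unfolding S_def .
    define g where "g = (\<lambda>b b'. basis_el b b' * m b)"
    define t where "t = (\<lambda>b. if b \<in> S then 0 else m b)"
    have gtw: "\<forall>b\<in>S. tw_el A M n (g b)"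
    proof
      fix b assume "b \<in> S" hence b: "b \<in> basis M" unfolding S_def by blast
      have "tw_el A M (vdeg M b + (n - vdeg M b)) (\<lambda>b'. basis_el b b' * m b)"
        by (rule tw_mult[OF tw_basis[OF b] tw_in[OF m]])
      thus "tw_el A M n (g b)" unfolding g_def by simp
    qed
    have ttw: "tw_el A M n t" unfolding t_def by (rule tw_restr[OF m])
    have tJ: "\<forall>b. t b \<in> J"
    proof
      fix b show "t b \<in> J"
      proof (cases "b \<in> S")
        case True thus ?thesis unfolding t_def using op_zero[OF J] by simp
      next
        case False thus ?thesis unfolding t_def S_def using tw_out[OF m, of b] op_zero[OF J] by auto
      qed
    qed
    have sumtw: "tw_el A M n (\<lambda>b'. \<Sum>b\<in>S. g b b')" by (rule tw_sum[OF finS gtw])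
    have decomp: "m = (\<lambda>b'. (\<Sum>b\<in>S. g b b') + t b')"
    proof
      fix b' show "m b' = (\<Sum>b\<in>S. g b b') + t b'"
        unfolding g_def t_def using sum_basis[OF finS, of b' m] by simp
    qed
    have "f m = f (\<lambda>b'. (\<Sum>b\<in>S. g b b') + t b')" using arg_cong[where f=f, OF decomp] .
    also have "\<dots> = (\<lambda>x. f (\<lambda>b'. \<Sum>b\<in>S. g b b') x + f t x)" by (rule cl_add[OF f sumtw ttw])
    also have "\<dots> = (\<lambda>x. (\<Sum>b\<in>S. f (g b) x) + f t x)" using cl_sum[OF f finS gtw] by simp
    finally have fm_eq: "f m = (\<lambda>x. (\<Sum>b\<in>S. f (g b) x) + f t x)" .
    have gz: "f (g b) c = 0" if b: "b \<in> S" for b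
    proof (cases "n - vdeg M b < p")
      case True
      hence "m b = 0" using fm unfolding filt_def by blast
      hence "g b = (\<lambda>b'. 0)" unfolding g_def by simp
      thus ?thesis using cl_zero[OF f] by simp
    next
      case False
      have bb: "b \<in> basis M" using b unfolding S_def by blast
      have "filt N (p + s) (vdeg M b + (n - vdeg M b) + q) (f (g b))"
        unfolding g_def by (rule H[OF bb _ tw_in[OF m]]) (use False in linarith)
      thus ?thesis using c unfolding filt_def by simp
    qed
    have "f m c = f t c" using fm_eq gz by simp
    moreover have "f t c \<in> I" using cJ ttw tJ by blast
    ultimately show "f m c \<in> I" by simp
  qed
  thus "f m c = 0" by (rule sep[OF xin])
qed

lemma lemX_mm:
  assumes f: "mod_map A M N q f" and m: "tw_el A M n m" and fm: "filt M p n m"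
  shows "filt N p (n + q) (f m)"
proof -
  have "filt N (p + 0) (n + q) (f m)"
  proof (rule lemX[OF mm_cl[OF f] m fm])
    fix b j a assume b: "b \<in> basis M" and j: "p \<le> j" and a: "a \<in> comp A j"
    have eq: "f (\<lambda>b'. basis_el b b' * a) = (\<lambda>x. f (basis_el b) x * a)"
      by (rule mm_mult[OF f tw_basis[OF b] a])
    show "filt N (p + 0) (vdeg M b + j + q) (f (\<lambda>b'. basis_el b b' * a))"
      unfolding filt_def eq
    proof (intro allI impI)
      fix c assume c: "vdeg M b + j + q - vdeg N c < p + 0"
      have "f (basis_el b) c \<in> comp A (vdeg M b + q - vdeg N c)"
        using tw_in[OF cl_tw[OF mm_cl[OF f] tw_basis[OF b]]] .
      moreover have "vdeg M b + q - vdeg N c < 0" using c j by linarith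
      ultimately have "f (basis_el b) c = 0" using neg_deg by blast
      thus "f (basis_el b) c * a = 0" by simp
    qed
  qed
  thus ?thesis by simp
qed

lemma lemX_D:
  assumes M: "is_twisted A M" and mn: "minimal M" and m: "tw_el A M n m" and fm: "filt M p n m"
  shows "filt M (p + 1) (n + 1) (Dm M m)"
proof (rule lemX[OF twD_cl[OF M] m fm])
  fix b j a assume b: "b \<in> basis M" and j: "p \<le> j" and a: "a \<in> comp A j"
  have eq: "Dm M (\<lambda>b'. basis_el b b' * a) =
      (\<lambda>b'. Dm M (basis_el b) b' * a + sgn_pow (vdeg M b) * (basis_el b b' * dA A a))"
    by (rule tw_leib[OF M tw_basis[OF b] a])
  show "filt M (p + 1) (vdeg M b + j + 1) (Dm M (\<lambda>b'. basis_el b b' * a))"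
    unfolding filt_def eq
  proof (intro allI impI)
    fix c assume c: "vdeg M b + j + 1 - vdeg M c < p + 1"
    hence cb: "c \<noteq> b" using j by auto
    have din: "Dm M (basis_el b) c \<in> comp A (vdeg M b + 1 - vdeg M c)"
      using tw_in[OF cl_tw[OF twD_cl[OF M] tw_basis[OF b]]] .
    have "Dm M (basis_el b) c = 0"
    proof (cases "vdeg M b + 1 - vdeg M c < 0")
      case True thus ?thesis using din neg_deg by blast
    next
      case False
      hence eqd: "vdeg M c = vdeg M b + 1 - 0" using c j by linarith
      have "dcomp M 0 b c = 0" using mn b unfolding minimal_def by simp
      thus ?thesis unfolding dcomp_def using eqd by simp
    qed
    thus "Dm M (basis_el b) c * a + sgn_pow (vdeg M b) * (basis_el b c * dA A a) = 0"
      using cb unfolding basis_el_def by simp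
  qed
qed

lemma cl_comp:
  assumes f: "cont_lin A M N p f" and g: "cont_lin A N P q g"
  shows "cont_lin A M P (p + q) (g \<circ> f)"
  unfolding cont_lin_def
proof (intro conjI allI impI ballI)
  fix n m assume m: "tw_el A M n m"
  show "tw_el A P (n + (p + q)) ((g \<circ> f) m)"
    using cl_tw[OF g cl_tw[OF f m]] by (simp add: add.assoc)
next
  fix n m m' assume m: "tw_el A M n m" and m': "tw_el A M n m'"
  show "(g \<circ> f) (\<lambda>b. m b + m' b) = (\<lambda>x. (g \<circ> f) m x + (g \<circ> f) m' x)"
    using cl_add[OF f m m'] cl_add[OF g cl_tw[OF f m] cl_tw[OF f m']] by simp
next
  fix n m c assume m: "tw_el A M n m"
  show "(g \<circ> f) (\<lambda>b. sm A c (m b)) = (\<lambda>x. sm A c ((g \<circ> f) m x))"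
    using cl_sm[OF f m] cl_sm[OF g cl_tw[OF f m]] by simp
next
  fix n I assume I: "I \<in> opens A"
  obtain J where J: "J \<in> opens A" and cJ: "\<forall>m. tw_el A N (n + p) m \<longrightarrow> (\<forall>b. m b \<in> J) \<longrightarrow> (\<forall>x. g m x \<in> I)"
    using cl_cont[OF g I, of "n + p"] by blast
  obtain K where K: "K \<in> opens A" and cK: "\<forall>m. tw_el A M n m \<longrightarrow> (\<forall>b. m b \<in> K) \<longrightarrow> (\<forall>x. f m x \<in> J)"
    using cl_cont[OF f J, of n] by blast
  show "\<exists>K\<in>opens A. \<forall>m. tw_el A M n m \<longrightarrow> (\<forall>b. m b \<in> K) \<longrightarrow> (\<forall>x. (g \<circ> f) m x \<in> I)"
    using K cK cJ cl_tw[OF f] by (metis comp_apply)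
qed

lemma c0_comp:
  assumes f: "closed0 A M N f" and g: "closed0 A N P g"
  shows "closed0 A M P (g \<circ> f)"
  unfolding closed0_def mod_map_def
proof (intro conjI allI impI)
  show "cont_lin A M P 0 (g \<circ> f)"
    using cl_comp[OF mm_cl[OF c0_mm[OF f]] mm_cl[OF c0_mm[OF g]]] by simp
next
  fix n q m a assume m: "tw_el A M n m" and a: "a \<in> comp A q"
  show "(g \<circ> f) (\<lambda>b. m b * a) = (\<lambda>x. (g \<circ> f) m x * a)"
    using mm_mult[OF c0_mm[OF f] m a] mm_mult[OF c0_mm[OF g] cl_tw[OF mm_cl[OF c0_mm[OF f]] m] a] by simp
next
  fix n m assume m: "tw_el A M n m"
  show "Dm P ((g \<circ> f) m) = (g \<circ> f) (Dm M m)"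
    using c0_D[OF g cl_tw[OF mm_cl[OF c0_mm[OF f]] m]] c0_D[OF f m] by simp
qed

end

locale invdata = pcA A for A :: "('k::comm_ring_1, 'a::ring_1) dga" +
  fixes M :: "('b, 'a) twmod" and u :: "('b \<Rightarrow> 'a) \<Rightarrow> ('b \<Rightarrow> 'a)"
  assumes twM: "is_twisted A M" and mnM: "minimal M" and cu: "closed0 A M M u" and chu: "coh_id A M u"
begin

lemma umm: "mod_map A M M 0 u" by (rule c0_mm[OF cu])
lemma ucl: "cont_lin A M M 0 u" by (rule mm_cl[OF umm])
lemma u_tw: "tw_el A M n m \<Longrightarrow> tw_el A M n (u m)"
  using cl_tw[OF ucl] by fastforce
lemma Dcl: "cont_lin A M M 1 (Dm M)" by (rule twD_cl[OF twM])
lemma D_tw: "tw_el A M n m \<Longrightarrow> tw_el A M (n + 1) (Dm M m)"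
  by (rule cl_tw[OF Dcl])

definition W where "W x = (\<lambda>b. u x b - x b)"

lemma W_tw: "tw_el A M n x \<Longrightarrow> tw_el A M n (W x)"
  unfolding W_def by (rule tw_diff[OF u_tw])
lemma W_add: "tw_el A M n x \<Longrightarrow> tw_el A M n y \<Longrightarrow> W (\<lambda>b. x b + y b) = (\<lambda>b. W x b + W y b)"
  unfolding W_def using cl_add[OF ucl] by (simp add: algebra_simps)
lemma W_diff: "tw_el A M n x \<Longrightarrow> tw_el A M n y \<Longrightarrow> W (\<lambda>b. x b - y b) = (\<lambda>b. W x b - W y b)"
  unfolding W_def using cl_diff[OF ucl] by (simp add: algebra_simps)
lemma W_zero: "W (\<lambda>b. 0) = (\<lambda>b. 0)"
  unfolding W_def using cl_zero[OF ucl] by simp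
lemma W_mult: "tw_el A M n x \<Longrightarrow> a \<in> comp A q \<Longrightarrow> W (\<lambda>b. x b * a) = (\<lambda>b. W x b * a)"
  unfolding W_def using mm_mult[OF umm] by (simp add: algebra_simps)
lemma sm_add_x: "x \<in> comp A n \<Longrightarrow> y \<in> comp A n \<Longrightarrow> sm A c (x + y) = sm A c x + sm A c y"
  using dg5 by blast
lemma sm_diff: "x \<in> comp A n \<Longrightarrow> y \<in> comp A n \<Longrightarrow> sm A c (x - y) = sm A c x - sm A c y"
proof -
  assume x: "x \<in> comp A n" and y: "y \<in> comp A n"
  have "sm A c ((x - y) + y) = sm A c (x - y) + sm A c y" by (rule sm_add_x[OF diff_in[OF x y] y])
  thus ?thesis by (simp add: algebra_simps)
qed
lemma W_sm: "tw_el A M n x \<Longrightarrow> W (\<lambda>b. sm A c (x b)) = (\<lambda>b. sm A c (W x b))"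
proof -
  assume x: "tw_el A M n x"
  have "W (\<lambda>b. sm A c (x b)) = (\<lambda>b. sm A c (u x b) - sm A c (x b))"
    unfolding W_def using cl_sm[OF ucl x] by simp
  also have "\<dots> = (\<lambda>b. sm A c (W x b))"
    unfolding W_def using sm_diff[OF tw_in[OF u_tw[OF x]] tw_in[OF x]] by simp
  finally show ?thesis .
qed
lemma W_D: "tw_el A M n x \<Longrightarrow> Dm M (W x) = W (Dm M x)"
proof -
  assume x: "tw_el A M n x"
  have "Dm M (W x) = (\<lambda>b. Dm M (u x) b - Dm M x b)"
    unfolding W_def by (rule cl_diff[OF Dcl u_tw[OF x] x])
  thus ?thesis unfolding W_def using c0_D[OF cu x] by simp
qed
lemma W_u: "tw_el A M n x \<Longrightarrow> W (u x) = u (W x)"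
  unfolding W_def using cl_diff[OF ucl u_tw] by simp
lemma W_cont: "I \<in> opens A \<Longrightarrow> \<exists>J\<in>opens A. \<forall>m. tw_el A M n m \<longrightarrow> (\<forall>b. m b \<in> J) \<longrightarrow> (\<forall>b. W m b \<in> I)"
proof -
  assume I: "I \<in> opens A"
  obtain J where J: "J \<in> opens A" and cJ: "\<forall>m. tw_el A M n m \<longrightarrow> (\<forall>b. m b \<in> J) \<longrightarrow> (\<forall>x. u m x \<in> I)"
    using cl_cont[OF ucl I, of n] by blast
  obtain K where K: "K \<in> opens A" "K \<subseteq> I" "K \<subseteq> J" using op_dir[OF I J] by blast
  have "\<forall>m. tw_el A M n m \<longrightarrow> (\<forall>b. m b \<in> K) \<longrightarrow> (\<forall>b. W m b \<in> I)"
  proof (intro allI impI)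
    fix m b assume m: "tw_el A M n m" and mK: "\<forall>b. m b \<in> K"
    have "u m b \<in> I" using cJ m mK K(3) by blast
    moreover have "m b \<in> I" using mK K(2) by blast
    ultimately show "W m b \<in> I" unfolding W_def
      using op_diff[OF I _ _ tw_in[OF u_tw[OF m]] tw_in[OF m]] by blast
  qed
  thus ?thesis using K(1) by blast
qed

lemma W_filt:
  assumes x: "tw_el A M n x" and fx: "filt M p n x"
  shows "filt M (p + 1) n (W x)"
proof -
  obtain h where h: "mod_map A M M (-1) h" and
    hh: "\<forall>n m. tw_el A M n m \<longrightarrow> (\<lambda>b. u m b - m b) = (\<lambda>b. Dm M (h m) b + h (Dm M m) b)"
    using chu unfolding coh_id_def by blast
  have hx: "tw_el A M (n + -1) (h x)" using cl_tw[OF mm_cl[OF h] x] .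
  have f1: "filt M p (n + -1) (h x)" by (rule lemX_mm[OF h x fx])
  have f2: "filt M (p + 1) (n + -1 + 1) (Dm M (h x))" by (rule lemX_D[OF twM mnM hx f1])
  have Dx: "tw_el A M (n + 1) (Dm M x)" using D_tw[OF x] .
  have f3: "filt M (p + 1) (n + 1) (Dm M x)" by (rule lemX_D[OF twM mnM x fx])
  have f4: "filt M (p + 1) (n + 1 + -1) (h (Dm M x))" by (rule lemX_mm[OF h Dx f3])
  have eq: "W x = (\<lambda>b. Dm M (h x) b + h (Dm M x) b)" unfolding W_def using hh[rule_format, OF x] .
  show ?thesis unfolding filt_def eq
  proof (intro allI impI)
    fix b assume "n - vdeg M b < p + 1"
    thus "Dm M (h x) b + h (Dm M x) b = 0" using f2 f4 unfolding filt_def by simp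
  qed
qed

primrec Hs :: "nat \<Rightarrow> ('b \<Rightarrow> 'a) \<Rightarrow> ('b \<Rightarrow> 'a)" where
  "Hs 0 m = (\<lambda>b. 0)"
| "Hs (Suc N) m = (\<lambda>b. m b - W (Hs N m) b)"

lemma Hs_tw: "tw_el A M n m \<Longrightarrow> tw_el A M n (Hs N m)"
  by (induction N) (auto intro: tw_zero tw_diff W_tw)

lemma Hs_dd: "tw_el A M n m \<Longrightarrow> filt M (int N) n (\<lambda>b. Hs (Suc N) m b - Hs N m b)"
proof (induction N)
  case 0
  show ?case unfolding filt_def
  proof (intro allI impI)
    fix b assume "n - vdeg M b < int 0"
    hence "n - vdeg M b < 0" by simp
    hence "m b = 0" by (rule neg_deg[OF _ tw_in[OF 0]])
    thus "Hs (Suc 0) m b - Hs 0 m b = 0" using W_zero by simp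
  qed
next
  case (Suc N)
  have t1: "tw_el A M n (Hs (Suc N) m)" by (rule Hs_tw[OF Suc.prems])
  have t0: "tw_el A M n (Hs N m)" by (rule Hs_tw[OF Suc.prems])
  have eq: "(\<lambda>b. Hs (Suc (Suc N)) m b - Hs (Suc N) m b) = (\<lambda>b. - W (\<lambda>b. Hs (Suc N) m b - Hs N m b) b)"
    using W_diff[OF t1 t0] by (simp add: fun_eq_iff)
  have "filt M (int N + 1) n (W (\<lambda>b. Hs (Suc N) m b - Hs N m b))"
    by (rule W_filt[OF tw_diff[OF t1 t0] Suc.IH[OF Suc.prems]])
  thus ?case unfolding eq filt_def by simp
qed

lemma Hs_stab: "tw_el A M n m \<Longrightarrow> n - vdeg M b < int N \<Longrightarrow> Hs (Suc N) m b = Hs N m b"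
  using Hs_dd unfolding filt_def by fastforce

lemma Hs_stab2:
  assumes m: "tw_el A M n m" and N: "n - vdeg M b < int N"
  shows "N \<le> N' \<Longrightarrow> Hs N' m b = Hs N m b"
proof (induction N' rule: dec_induct)
  case base thus ?case by simp
next
  case (step k)
  have "n - vdeg M b < int k" using N step(1) by linarith
  thus ?case using Hs_stab[OF m] step(3) by simp
qed

definition v where "v m = (\<lambda>b. Hs (SOME N. \<forall>N'\<ge>N. Hs N' m b = Hs N m b) m b)"

lemma v_eq: "tw_el A M n m \<Longrightarrow> n - vdeg M b < int N \<Longrightarrow> v m b = Hs N m b"
proof -
  assume m: "tw_el A M n m" and N: "n - vdeg M b < int N"
  let ?P = "\<lambda>K. \<forall>N'\<ge>K. Hs N' m b = Hs K m b"
  have "?P N" using Hs_stab2[OF m N] by blast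
  hence P0: "?P (SOME K. ?P K)" by (rule someI)
  have "v m b = Hs (SOME K. ?P K) m b" unfolding v_def by simp
  also have "\<dots> = Hs (max (SOME K. ?P K) N) m b" using P0[rule_format, of "max (SOME K. ?P K) N"] by simp
  also have "\<dots> = Hs N m b" using Hs_stab2[OF m N, of "max (SOME K. ?P K) N"] by simp
  finally show ?thesis .
qed

lemma v_eq': "tw_el A M n m \<Longrightarrow> v m b = Hs (nat (n - vdeg M b) + 1) m b"
  by (rule v_eq) auto

lemma v_tw: assumes m: "tw_el A M n m" shows "tw_el A M n (v m)"
proof -
  have out: "v m b = 0" if "b \<notin> basis M" for b
    using v_eq'[OF m, of b] tw_out[OF Hs_tw[OF m] that] by (simp del: Hs.simps)
  have inn: "v m b \<in> comp A (n - vdeg M b)" for b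
    using v_eq'[OF m, of b] tw_in[OF Hs_tw[OF m]] by (simp del: Hs.simps)
  have fin: "finite {b\<in>basis M. v m b \<notin> I}" if I: "I \<in> opens A" for I
  proof -
    obtain N0 where N0: "\<forall>j. int N0 \<le> j \<longrightarrow> comp A j \<subseteq> I" using op_high[OF I] by blast
    show ?thesis
    proof (rule finite_subset[OF _ tw_fin[OF Hs_tw[OF m, of N0] I]])
      show "{b\<in>basis M. v m b \<notin> I} \<subseteq> {b\<in>basis M. Hs N0 m b \<notin> I}"
      proof safe
        fix b assume b: "b \<in> basis M" and nI: "v m b \<notin> I" and hI: "Hs N0 m b \<in> I"
        show False
        proof (cases "n - vdeg M b < int N0")
          case True thus False using v_eq[OF m True] nI hI by simp
        next
          case False
          hence "comp A (n - vdeg M b) \<subseteq> I" using N0 by simp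
          thus False using inn[of b] nI by blast
        qed
      qed
    qed
  qed
  show ?thesis unfolding tw_el_def using out inn fin by blast
qed

lemma approx: "tw_el A M n m \<Longrightarrow> J \<in> opens A \<Longrightarrow> \<exists>N0. \<forall>N\<ge>N0. \<forall>b. v m b - Hs N m b \<in> J \<and> (\<lambda>b. Hs (Suc N) m b - Hs N m b) b \<in> J"
proof -
  assume m: "tw_el A M n m" and J: "J \<in> opens A"
  obtain N0 where N0: "\<forall>j. int N0 \<le> j \<longrightarrow> comp A j \<subseteq> J" using op_high[OF J] by blast
  have "\<forall>N\<ge>N0. \<forall>b. v m b - Hs N m b \<in> J \<and> (\<lambda>b. Hs (Suc N) m b - Hs N m b) b \<in> J"
  proof (intro allI impI)
    fix N b assume N: "N0 \<le> N"
    show "v m b - Hs N m b \<in> J \<and> (\<lambda>b. Hs (Suc N) m b - Hs N m b) b \<in> J"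
    proof (cases "n - vdeg M b < int N")
      case True thus ?thesis using v_eq[OF m True] Hs_stab[OF m True] op_zero[OF J] by simp
    next
      case False
      hence "comp A (n - vdeg M b) \<subseteq> J" using N0 N by auto
      thus ?thesis using diff_in[OF tw_in[OF v_tw[OF m]] tw_in[OF Hs_tw[OF m]]]
          diff_in[OF tw_in[OF Hs_tw[OF m]] tw_in[OF Hs_tw[OF m]]] by blast
    qed
  qed
  thus ?thesis by blast
qed

end

context pcA begin
lemma sm_zero_x: "sm A c 0 = 0"
proof -
  have "sm A c (0 + 0) = sm A c 0 + sm A c 0" using dg5 zero_in by blast
  thus ?thesis by (metis add_0 add_cancel_left_right)
qed
lemma tw_sm: "tw_el A M n m \<Longrightarrow> tw_el A M n (\<lambda>b. sm A c (m b))"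
proof -
  assume a: "tw_el A M n m"
  have "finite {b\<in>basis M. sm A c (m b) \<notin> I}" if I: "I \<in> opens A" for I
  proof (rule finite_subset[OF _ tw_fin[OF a I]])
    show "{b\<in>basis M. sm A c (m b) \<notin> I} \<subseteq> {b\<in>basis M. m b \<notin> I}"
    proof safe
      fix b assume "m b \<in> I" "sm A c (m b) \<notin> I"
      moreover have "ksubmod A (I \<inter> comp A (n - vdeg M b))" by (rule op_ks[OF I])
      ultimately show False using tw_in[OF a, of b] unfolding ksubmod_def by blast
    qed
  qed
  thus ?thesis using a tw_in[OF a] sm_in sm_zero_x unfolding tw_el_def by auto
qed
end

context invdata begin

lemma Hs_u: "tw_el A M n m \<Longrightarrow> Hs N (u m) = u (Hs N m)"
proof (induction N)
  case 0 thus ?case using cl_zero[OF ucl] by simp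
next
  case (Suc N)
  have "Hs (Suc N) (u m) = (\<lambda>b. u m b - u (W (Hs N m)) b)"
    using Suc W_u[OF Hs_tw[OF Suc.prems]] by simp
  also have "\<dots> = u (Hs (Suc N) m)"
    using cl_diff[OF ucl Suc.prems W_tw[OF Hs_tw[OF Suc.prems]]] by simp
  finally show ?case .
qed

lemma u_Hs: "u (Hs N m) b = m b - (Hs (Suc N) m b - Hs N m b)"
  unfolding Hs.simps W_def by (simp add: algebra_simps)

lemma v_left: "tw_el A M n m \<Longrightarrow> v (u m) = m"
proof
  fix b assume m: "tw_el A M n m"
  let ?N = "nat (n - vdeg M b) + 1"
  have N: "n - vdeg M b < int ?N" by simp
  have "v (u m) b = Hs ?N (u m) b" by (rule v_eq[OF u_tw[OF m] N])
  also have "\<dots> = u (Hs ?N m) b" using Hs_u[OF m] by simp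
  also have "\<dots> = m b" unfolding u_Hs using Hs_stab[OF m N] by simp
  finally show "v (u m) b = m b" .
qed

lemma v_right: assumes m: "tw_el A M n m" shows "u (v m) = m"
proof (rule tw_eqI[OF u_tw[OF v_tw[OF m]] m])
  fix I b assume I: "I \<in> opens A"
  obtain J where J: "J \<in> opens A" and cJ: "\<forall>m. tw_el A M n m \<longrightarrow> (\<forall>b. m b \<in> J) \<longrightarrow> (\<forall>x. u m x \<in> I)"
    using cl_cont[OF ucl I, of n] by blast
  obtain K where K: "K \<in> opens A" "K \<subseteq> I" "K \<subseteq> J" using op_dir[OF I J] by blast
  obtain N where N: "\<forall>b. v m b - Hs N m b \<in> K \<and> (\<lambda>b. Hs (Suc N) m b - Hs N m b) b \<in> K"
    using approx[OF m K(1)] by blast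
  define d where "d = (\<lambda>b. v m b - Hs N m b)"
  have dtw: "tw_el A M n d" unfolding d_def by (rule tw_diff[OF v_tw[OF m] Hs_tw[OF m]])
  have "\<forall>b. d b \<in> J" using N K(3) unfolding d_def by blast
  hence udI: "u d b \<in> I" using cJ dtw by blast
  have "v m = (\<lambda>b. Hs N m b + d b)" unfolding d_def by simp
  hence "u (v m) = u (\<lambda>b. Hs N m b + d b)" by simp
  also have "\<dots> = (\<lambda>x. u (Hs N m) x + u d x)" by (rule cl_add[OF ucl Hs_tw[OF m] dtw])
  finally have "u (v m) b - m b = - (Hs (Suc N) m b - Hs N m b) + u d b"
    using u_Hs[of N m b] by simp
  moreover have "- (Hs (Suc N) m b - Hs N m b) \<in> I"
    using op_neg[OF I _ diff_in[OF tw_in[OF Hs_tw[OF m]] tw_in[OF Hs_tw[OF m]]]] N K(2) by blast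
  moreover have "u d b \<in> comp A (n - vdeg M b)" using tw_in[OF u_tw[OF dtw]] .
  moreover have "- (Hs (Suc N) m b - Hs N m b) \<in> comp A (n - vdeg M b)"
    using neg_in[OF diff_in[OF tw_in[OF Hs_tw[OF m]] tw_in[OF Hs_tw[OF m]]]] .
  ultimately show "u (v m) b - m b \<in> I" using op_add[OF I] udI by metis
qed

lemma Hs_add: "tw_el A M n m \<Longrightarrow> tw_el A M n m' \<Longrightarrow> Hs N (\<lambda>b. m b + m' b) = (\<lambda>b. Hs N m b + Hs N m' b)"
proof (induction N)
  case 0 thus ?case by simp
next
  case (Suc N)
  thus ?case using W_add[OF Hs_tw[OF Suc.prems(1)] Hs_tw[OF Suc.prems(2)], of N N]
    by (simp add: algebra_simps)
qed

lemma Hs_sm: "tw_el A M n m \<Longrightarrow> Hs N (\<lambda>b. sm A c (m b)) = (\<lambda>b. sm A c (Hs N m b))"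
proof (induction N)
  case 0 thus ?case using sm_zero_x by simp
next
  case (Suc N)
  have "Hs (Suc N) (\<lambda>b. sm A c (m b)) = (\<lambda>b. sm A c (m b) - sm A c (W (Hs N m) b))"
    using Suc W_sm[OF Hs_tw[OF Suc.prems]] by simp
  also have "\<dots> = (\<lambda>b. sm A c (Hs (Suc N) m b))"
    using sm_diff[OF tw_in[OF Suc.prems] tw_in[OF W_tw[OF Hs_tw[OF Suc.prems]]]] by simp
  finally show ?case .
qed

lemma Hs_mult: "tw_el A M n m \<Longrightarrow> a \<in> comp A q \<Longrightarrow> Hs N (\<lambda>b. m b * a) = (\<lambda>b. Hs N m b * a)"
proof (induction N)
  case 0 thus ?case by simp
next
  case (Suc N)
  thus ?case using W_mult[OF Hs_tw[OF Suc.prems(1)] Suc.prems(2), of N]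
    by (simp add: algebra_simps)
qed

lemma Hs_D: "tw_el A M n m \<Longrightarrow> Dm M (Hs N m) = Hs N (Dm M m)"
proof (induction N)
  case 0 thus ?case using cl_zero[OF Dcl] by simp
next
  case (Suc N)
  have "Dm M (Hs (Suc N) m) = (\<lambda>b. Dm M m b - Dm M (W (Hs N m)) b)"
    using cl_diff[OF Dcl Suc.prems W_tw[OF Hs_tw[OF Suc.prems]]] by simp
  also have "\<dots> = Hs (Suc N) (Dm M m)"
    using W_D[OF Hs_tw[OF Suc.prems]] Suc by simp
  finally show ?case .
qed

lemma Hs_cont: "I \<in> opens A \<Longrightarrow> \<exists>J\<in>opens A. \<forall>m. tw_el A M n m \<longrightarrow> (\<forall>b. m b \<in> J) \<longrightarrow> (\<forall>b. Hs N m b \<in> I)"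
proof (induction N arbitrary: I)
  case 0 thus ?case using op_zero by auto
next
  case (Suc N)
  obtain J1 where J1: "J1 \<in> opens A" and c1: "\<forall>m. tw_el A M n m \<longrightarrow> (\<forall>b. m b \<in> J1) \<longrightarrow> (\<forall>b. W m b \<in> I)"
    using W_cont[OF Suc.prems] by blast
  obtain J2 where J2: "J2 \<in> opens A" and c2: "\<forall>m. tw_el A M n m \<longrightarrow> (\<forall>b. m b \<in> J2) \<longrightarrow> (\<forall>b. Hs N m b \<in> J1)"
    using Suc.IH[OF J1] by blast
  obtain K where K: "K \<in> opens A" "K \<subseteq> I" "K \<subseteq> J2" using op_dir[OF Suc.prems J2] by blast
  have "\<forall>m. tw_el A M n m \<longrightarrow> (\<forall>b. m b \<in> K) \<longrightarrow> (\<forall>b. Hs (Suc N) m b \<in> I)"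
  proof (intro allI impI)
    fix m b assume m: "tw_el A M n m" and mK: "\<forall>b. m b \<in> K"
    have "W (Hs N m) b \<in> I" using c1 c2 Hs_tw[OF m] m mK K(3) by blast
    moreover have "m b \<in> I" using mK K(2) by blast
    ultimately show "Hs (Suc N) m b \<in> I"
      using op_diff[OF Suc.prems _ _ tw_in[OF m] tw_in[OF W_tw[OF Hs_tw[OF m]]]] by simp
  qed
  thus ?case using K(1) by blast
qed

lemma v_closed: "closed0 A M M v"
  unfolding closed0_def mod_map_def cont_lin_def
proof (intro conjI allI impI ballI)
  fix n m assume m: "tw_el A M n m"
  show "tw_el A M (n + 0) (v m)" using v_tw[OF m] by simp
next
  fix n m m' assume m: "tw_el A M n m" and m': "tw_el A M n m'"
  show "v (\<lambda>b. m b + m' b) = (\<lambda>x. v m x + v m' x)"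
  proof
    fix b
    let ?N = "nat (n - vdeg M b) + 1"
    have N: "n - vdeg M b < int ?N" by simp
    show "v (\<lambda>b. m b + m' b) b = v m b + v m' b"
      using v_eq[OF tw_add[OF m m'] N] v_eq[OF m N] v_eq[OF m' N] Hs_add[OF m m', of ?N] by (simp del: Hs.simps)
  qed
next
  fix n m c assume m: "tw_el A M n m"
  show "v (\<lambda>b. sm A c (m b)) = (\<lambda>x. sm A c (v m x))"
  proof
    fix b
    let ?N = "nat (n - vdeg M b) + 1"
    have N: "n - vdeg M b < int ?N" by simp
    show "v (\<lambda>b. sm A c (m b)) b = sm A c (v m b)"
      using v_eq[OF tw_sm[OF m] N] v_eq[OF m N] Hs_sm[OF m, of ?N c] by (simp del: Hs.simps)
  qed
next
  fix n I assume I: "I \<in> opens A"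
  obtain N0 where N0: "\<forall>j. int N0 \<le> j \<longrightarrow> comp A j \<subseteq> I" using op_high[OF I] by blast
  obtain J where J: "J \<in> opens A" and cJ: "\<forall>m. tw_el A M n m \<longrightarrow> (\<forall>b. m b \<in> J) \<longrightarrow> (\<forall>b. Hs N0 m b \<in> I)"
    using Hs_cont[OF I] by blast
  have "\<forall>m. tw_el A M n m \<longrightarrow> (\<forall>b. m b \<in> J) \<longrightarrow> (\<forall>x. v m x \<in> I)"
  proof (intro allI impI)
    fix m x assume m: "tw_el A M n m" and mJ: "\<forall>b. m b \<in> J"
    show "v m x \<in> I"
    proof (cases "n - vdeg M x < int N0")
      case True thus ?thesis using v_eq[OF m True] cJ m mJ by simp
    next
      case False
      hence "comp A (n - vdeg M x) \<subseteq> I" using N0 by simp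
      thus ?thesis using tw_in[OF v_tw[OF m], of x] by blast
    qed
  qed
  thus "\<exists>J\<in>opens A. \<forall>m. tw_el A M n m \<longrightarrow> (\<forall>b. m b \<in> J) \<longrightarrow> (\<forall>x. v m x \<in> I)" using J by blast
next
  fix n q m a assume m: "tw_el A M n m" and a: "a \<in> comp A q"
  show "v (\<lambda>b. m b * a) = (\<lambda>x. v m x * a)"
  proof
    fix b
    let ?N = "nat (max (n + q - vdeg M b) (n - vdeg M b)) + 1"
    have N1: "n + q - vdeg M b < int ?N" and N2: "n - vdeg M b < int ?N" by linarith+
    show "v (\<lambda>b. m b * a) b = v m b * a"
      using v_eq[OF tw_mult[OF m a] N1] v_eq[OF m N2] Hs_mult[OF m a, of ?N] by (simp del: Hs.simps)
  qed
next
  fix n m assume m: "tw_el A M n m"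
  show "Dm M (v m) = v (Dm M m)"
  proof (rule tw_eqI[OF D_tw[OF v_tw[OF m]] v_tw[OF D_tw[OF m]]])
    fix I b assume I: "I \<in> opens A"
    obtain J where J: "J \<in> opens A" and cJ: "\<forall>m. tw_el A M n m \<longrightarrow> (\<forall>b. m b \<in> J) \<longrightarrow> (\<forall>x. Dm M m x \<in> I)"
      using cl_cont[OF Dcl I, of n] by blast
    obtain N0 where N0: "\<forall>N\<ge>N0. \<forall>b. v m b - Hs N m b \<in> J \<and> (\<lambda>b. Hs (Suc N) m b - Hs N m b) b \<in> J"
      using approx[OF m J] by blast
    define N where "N = max N0 (nat (n + 1 - vdeg M b) + 1)"
    have NN: "N \<ge> N0" and Nb: "n + 1 - vdeg M b < int N" unfolding N_def by auto
    define d where "d = (\<lambda>b. v m b - Hs N m b)"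
    have dtw: "tw_el A M n d" unfolding d_def by (rule tw_diff[OF v_tw[OF m] Hs_tw[OF m]])
    have "\<forall>b. d b \<in> J" using N0 NN unfolding d_def by blast
    hence dI: "Dm M d b \<in> I" using cJ dtw by blast
    have "v m = (\<lambda>b. Hs N m b + d b)" unfolding d_def by simp
    hence "Dm M (v m) = Dm M (\<lambda>b. Hs N m b + d b)" by simp
    also have "\<dots> = (\<lambda>x. Dm M (Hs N m) x + Dm M d x)" by (rule cl_add[OF Dcl Hs_tw[OF m] dtw])
    finally have "Dm M (v m) b = Hs N (Dm M m) b + Dm M d b" using Hs_D[OF m] by simp
    moreover have "v (Dm M m) b = Hs N (Dm M m) b" by (rule v_eq[OF D_tw[OF m] Nb])
    ultimately show "Dm M (v m) b - v (Dm M m) b \<in> I" using dI by simp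
  qed
qed

lemma inv_ex: "\<exists>v'. closed0 A M M v' \<and> (\<forall>n m. tw_el A M n m \<longrightarrow> v' (u m) = m \<and> u (v' m) = m)"
  using v_closed v_left v_right by blast

end

theorem proposition6p6:
  fixes A :: "('k::comm_ring_1, 'a::ring_1) dga"
    and M :: "('b, 'a) twmod" and N :: "('c, 'a) twmod"
    and f :: "('b \<Rightarrow> 'a) \<Rightarrow> ('c \<Rightarrow> 'a)"
  assumes "is_dga A" and "nonneg_graded A" and "pseudo_compact A"
    and "is_twisted A M" and "is_twisted A N"
    and "minimal M" and "minimal N"
    and "homotopy_equiv A M N f"
  shows "is_iso A M N f"
proof -
  interpret P: pcA A using assms(1-3) by unfold_locales
  obtain g where f: "closed0 A M N f" and g: "closed0 A N M g"
    and gf: "coh_id A M (g \<circ> f)" and fg: "coh_id A N (f \<circ> g)"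
    using assms(8) unfolding homotopy_equiv_def by blast
  have gfc: "closed0 A M M (g \<circ> f)" by (rule P.c0_comp[OF f g])
  have fgc: "closed0 A N N (f \<circ> g)" by (rule P.c0_comp[OF g f])
  interpret I1: invdata A M "g \<circ> f"
    by unfold_locales (fact assms(4), fact assms(6), fact gfc, fact gf)
  interpret I2: invdata A N "f \<circ> g"
    by unfold_locales (fact assms(5), fact assms(7), fact fgc, fact fg)
  obtain v1 where v1: "closed0 A M M v1"
    and v1i: "\<forall>n m. tw_el A M n m \<longrightarrow> v1 ((g \<circ> f) m) = m \<and> (g \<circ> f) (v1 m) = m"
    using I1.inv_ex by blast
  obtain v2 where v2: "closed0 A N N v2"
    and v2i: "\<forall>n m. tw_el A N n m \<longrightarrow> v2 ((f \<circ> g) m) = m \<and> (f \<circ> g) (v2 m) = m"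
    using I2.inv_ex by blast
  have gcl: "cont_lin A N M 0 g" by (rule P.mm_cl[OF P.c0_mm[OF g]])
  have v2cl: "cont_lin A N N 0 v2" by (rule P.mm_cl[OF P.c0_mm[OF v2]])
  have left: "\<forall>n m. tw_el A M n m \<longrightarrow> (v1 \<circ> g) (f m) = m" using v1i by simp
  have right: "\<forall>n m. tw_el A N n m \<longrightarrow> f ((v1 \<circ> g) m) = m"
  proof (intro allI impI)
    fix n m assume m: "tw_el A N n m"
    define y where "y = g (v2 m)"
    have ytw: "tw_el A M n y" unfolding y_def using P.cl_tw[OF gcl P.cl_tw[OF v2cl m]] by simp
    have fy: "f y = m" unfolding y_def using v2i m by simp
    have "(v1 \<circ> g) m = (v1 \<circ> g) (f y)" using fy by simp
    also have "\<dots> = y" using left ytw by blast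
    finally show "f ((v1 \<circ> g) m) = m" using fy by simp
  qed
  show ?thesis unfolding is_iso_def
    using f P.c0_comp[OF g v1] left right by blast
qed

end
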